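(* Let $0\le\lambda<n$, $1\le p<\infty$ and $f\in L^{p,\lambda}(\mathbb{R}^n)$. Then $$\lim_{N\to\infty}\ \sup_{x\in\mathbb{R}^n}\int_{B(x,1)}|f(y)|^p\,\chi_{\mathbb{R}^n\setminus B(0,N)}(y)\,dy=0$$ holds if and only if, for every fixed $R_0>0$, $$\lim_{N\to\infty}\ \sup_{x\in\mathbb{R}^n}\int_{B(x,r)}|f(y)|^p\,\chi_{\mathbb{R}^n\setminus B(0,N)}(y)\,dy=0$$ uniformly in $r\in(0,R_0]$ (here $N$ ranges over $\mathbb{N}$).
   Context: $B(x,r)$ is the open ball in $\mathbb{R}^n$ with center $x$ and radius $r$, and $\chi_E$ is the characteristic function of $E$. For $1\le p<\infty$ and $0\le\lambda\le n$, the homogeneous Morrey space $L^{p,\lambda}(\mathbb{R}^n)$ is the space of $f\in L^p_{\mathrm{loc}}(\mathbb{R}^n)$ with $\|f\|_{p,\lambda}:=\sup_{x\in\mathbb{R}^n,\,r>0}\big(r^{-\lambda}\int_{B(x,r)}|f(y)|^p\,dy\big)^{1/p}<\infty$. *)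

theory Defs
  imports "HOL-Analysis.Analysis"
begin

definition Lp_loc :: "real \<Rightarrow> ('a::euclidean_space \<Rightarrow> real) \<Rightarrow> bool" where
  "Lp_loc p f \<longleftrightarrow> f \<in> borel_measurable lebesgue \<and>
     (\<forall>K. compact K \<longrightarrow> set_integrable lebesgue K (\<lambda>y. \<bar>f y\<bar> powr p))"

definition morrey_space :: "real \<Rightarrow> real \<Rightarrow> ('a::euclidean_space \<Rightarrow> real) set" where
  "morrey_space p lam = {f. Lp_loc p f \<and>
     bdd_above {(r powr (-lam) * (LINT y:ball x r|lebesgue. \<bar>f y\<bar> powr p)) powr (1/p)
                 | x r. r > 0}}"

definition tail_int :: "real \<Rightarrow> ('a::euclidean_space \<Rightarrow> real) \<Rightarrow> 'a \<Rightarrow> real \<Rightarrow> nat \<Rightarrow> real" where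
  "tail_int p f x r N =
     (LINT y:ball x r|lebesgue. \<bar>f y\<bar> powr p * indicator (UNIV - ball 0 (real N)) y)"

end

theory Submission
  imports Defs
begin

lemma tail_integrable:
  fixes f :: "'a::euclidean_space \<Rightarrow> real"
  assumes "Lp_loc p f"
  shows "integrable lebesgue (\<lambda>y. indicator (ball z s) y * (\<bar>f y\<bar> powr p * indicator (UNIV - ball 0 (real N)) y))"
    and "integrable lebesgue (\<lambda>y. indicator (ball z s) y * \<bar>f y\<bar> powr p)"
proof -
  have "set_integrable lebesgue (cball z s) (\<lambda>y. \<bar>f y\<bar> powr p)"
    using assms unfolding Lp_loc_def by auto
  then have "set_integrable lebesgue (ball z s) (\<lambda>y. \<bar>f y\<bar> powr p)"
    by (rule set_integrable_subset) auto
  then have I: "integrable lebesgue (\<lambda>y. indicator (ball z s) y * \<bar>f y\<bar> powr p)"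
    unfolding set_integrable_def by simp
  then show "integrable lebesgue (\<lambda>y. indicator (ball z s) y * \<bar>f y\<bar> powr p)" .
  have "integrable lebesgue (\<lambda>y. indicator (UNIV - ball 0 (real N)) y *\<^sub>R (indicator (ball z s) y * \<bar>f y\<bar> powr p))"
    by (rule integrable_mult_indicator[OF _ I]) auto
  then show "integrable lebesgue (\<lambda>y. indicator (ball z s) y * (\<bar>f y\<bar> powr p * indicator (UNIV - ball 0 (real N)) y))"
    by (simp add: mult_ac)
qed

lemma tail_nonneg: "0 \<le> tail_int p f x r N"
  unfolding tail_int_def set_lebesgue_integral_def
  by (intro Bochner_Integration.integral_nonneg) (auto simp: indicator_def intro!: mult_nonneg_nonneg)

lemma tail_cover:
  fixes f :: "'a::euclidean_space \<Rightarrow> real"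
  assumes "Lp_loc p f" "finite C" "ball x r \<subseteq> (\<Union>c\<in>C. ball (x + c) 1)"
  shows "tail_int p f x r N \<le> (\<Sum>c\<in>C. tail_int p f (x + c) 1 N)"
proof -
  let ?g = "\<lambda>y. \<bar>f y\<bar> powr p * indicator (UNIV - ball 0 (real N)) y"
  have g0: "0 \<le> ?g y" for y by (auto simp: indicator_def)
  have "tail_int p f x r N = integral\<^sup>L lebesgue (\<lambda>y. indicator (ball x r) y * ?g y)"
    unfolding tail_int_def set_lebesgue_integral_def by simp
  also have "\<dots> \<le> integral\<^sup>L lebesgue (\<lambda>y. \<Sum>c\<in>C. indicator (ball (x+c) 1) y * ?g y)"
  proof (rule integral_mono)
    show "integrable lebesgue (\<lambda>y. indicator (ball x r) y * ?g y)"
      by (rule tail_integrable(1)[OF assms(1)])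
    show "integrable lebesgue (\<lambda>y. \<Sum>c\<in>C. indicator (ball (x+c) 1) y * ?g y)"
      by (rule Bochner_Integration.integrable_sum) (rule tail_integrable(1)[OF assms(1)])
    fix y
    show "indicator (ball x r) y * ?g y \<le> (\<Sum>c\<in>C. indicator (ball (x+c) 1) y * ?g y)"
    proof (cases "y \<in> ball x r")
      case True
      then obtain c where c: "c \<in> C" "y \<in> ball (x+c) 1" using assms(3) by blast
      have "indicator (ball x r) y * ?g y = indicator (ball (x+c) 1) y * ?g y"
        using True c by simp
      also have "\<dots> \<le> (\<Sum>c\<in>C. indicator (ball (x+c) 1) y * ?g y)"
        by (rule member_le_sum[OF c(1)]) (use g0 assms(2) in \<open>auto simp: indicator_def\<close>)
      finally show ?thesis .
    next
      case False
      then show ?thesis using g0 by (simp add: sum_nonneg)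
    qed
  qed
  also have "\<dots> = (\<Sum>c\<in>C. integral\<^sup>L lebesgue (\<lambda>y. indicator (ball (x+c) 1) y * ?g y))"
    by (intro Bochner_Integration.integral_sum tail_integrable(1)[OF assms(1)])
  also have "\<dots> = (\<Sum>c\<in>C. tail_int p f (x + c) 1 N)"
    unfolding tail_int_def set_lebesgue_integral_def by simp
  finally show ?thesis .
qed

theorem lemma3p4:
  fixes f :: "'a::euclidean_space \<Rightarrow> real" and p lam :: real
  assumes "0 \<le> lam" and "lam < real DIM('a)" and "1 \<le> p"
    and "f \<in> morrey_space p lam"
  shows "((\<lambda>N. SUP x. tail_int p f x 1 N) \<longlonglongrightarrow> 0) \<longleftrightarrow>
         (\<forall>R0>0. uniform_limit {0<..R0} (\<lambda>N r. SUP x. tail_int p f x r N) (\<lambda>r. 0) sequentially)"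
proof
  assume H: "\<forall>R0>0. uniform_limit {0<..R0} (\<lambda>N r. SUP x. tail_int p f x r N) (\<lambda>r. 0) sequentially"
  have "uniform_limit {0<..1} (\<lambda>N r. SUP x. tail_int p f x r N) (\<lambda>r. 0) sequentially"
    using H by auto
  then show "(\<lambda>N. SUP x. tail_int p f x 1 N) \<longlonglongrightarrow> 0"
    unfolding uniform_limit_iff tendsto_iff
  proof (intro allI impI)
    fix e :: real assume "e > 0"
    assume U: "\<forall>e>0. \<forall>\<^sub>F N in sequentially. \<forall>r\<in>{0<..1}. dist (SUP x. tail_int p f x r N) 0 < e"
    show "\<forall>\<^sub>F N in sequentially. dist (SUP x. tail_int p f x 1 N) 0 < e"
      using U[rule_format, OF \<open>e > 0\<close>] by (rule eventually_mono) auto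
  qed
next
  assume T: "(\<lambda>N. SUP x. tail_int p f x 1 N) \<longlonglongrightarrow> 0"
  have Lp: "Lp_loc p f" using assms(4) unfolding morrey_space_def by auto
  obtain M where M: "\<And>x. (1 powr (-lam) * (LINT y:ball x 1|lebesgue. \<bar>f y\<bar> powr p)) powr (1/p) \<le> M"
  proof -
    from assms(4) obtain M where
      "\<forall>z\<in>{(r powr (-lam) * (LINT y:ball x r|lebesgue. \<bar>f y\<bar> powr p)) powr (1/p) | x r. r > 0}. z \<le> M"
      unfolding morrey_space_def bdd_above_def by blast
    then have "\<And>x. (1 powr (-lam) * (LINT y:ball x 1|lebesgue. \<bar>f y\<bar> powr p)) powr (1/p) \<le> M"
      by (metis (mono_tags, lifting) mem_Collect_eq zero_less_one)
    then show ?thesis using that by blast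
  qed
  have bd1: "tail_int p f x 1 N \<le> M powr p" for x N
  proof -
    let ?I = "LINT y:ball x 1|lebesgue. \<bar>f y\<bar> powr p"
    have I0: "0 \<le> ?I" unfolding set_lebesgue_integral_def
      by (intro Bochner_Integration.integral_nonneg) auto
    have "tail_int p f x 1 N \<le> ?I"
      unfolding tail_int_def set_lebesgue_integral_def
      using tail_integrable(1)[OF Lp, of x 1 N] tail_integrable(2)[OF Lp, of x 1]
      by (intro integral_mono) (auto simp: indicator_def)
    also have "?I = (?I powr (1/p)) powr p"
      using I0 assms(3) by (simp add: powr_powr)
    also have "\<dots> \<le> M powr p"
      using M[of x] assms(3) by (intro powr_mono2) auto
    finally show ?thesis .
  qed
  have bdd1: "bdd_above (range (\<lambda>x. tail_int p f x 1 N))" for N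
    by (rule bdd_aboveI2[where M="M powr p"]) (rule bd1)
  show "\<forall>R0>0. uniform_limit {0<..R0} (\<lambda>N r. SUP x. tail_int p f x r N) (\<lambda>r. 0) sequentially"
  proof (intro allI impI)
    fix R0 :: real assume "R0 > 0"
    have "cball (0::'a) R0 \<subseteq> (\<Union>c\<in>cball 0 R0. ball c 1)" by force
    then obtain C where C: "C \<subseteq> cball 0 R0" "finite C" "cball (0::'a) R0 \<subseteq> (\<Union>c\<in>C. ball c 1)"
      by (metis compactE_image compact_cball open_ball)
    have cov: "ball x r \<subseteq> (\<Union>c\<in>C. ball (x + c) 1)" if "r \<le> R0" for x r
    proof
      fix y assume "y \<in> ball x r"
      then have "y - x \<in> cball 0 R0" using that by (auto simp: dist_norm norm_minus_commute)
      then obtain c where "c \<in> C" "y - x \<in> ball c 1" using C(3) by blast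
      then show "y \<in> (\<Union>c\<in>C. ball (x + c) 1)"
        by (auto simp: dist_norm algebra_simps)
    qed
    define K where "K = real (card C)"
    have K0: "0 \<le> K" unfolding K_def by simp
    have key: "tail_int p f x r N \<le> K * (SUP x. tail_int p f x 1 N)" if "r \<le> R0" for x r N
    proof -
      have "tail_int p f x r N \<le> (\<Sum>c\<in>C. tail_int p f (x + c) 1 N)"
        by (rule tail_cover[OF Lp C(2) cov[OF that]])
      also have "\<dots> \<le> (\<Sum>c\<in>C. (SUP x. tail_int p f x 1 N))"
        by (intro sum_mono cSUP_upper bdd1) auto
      finally show ?thesis unfolding K_def by simp
    qed
    show "uniform_limit {0<..R0} (\<lambda>N r. SUP x. tail_int p f x r N) (\<lambda>r. 0) sequentially"
      unfolding uniform_limit_iff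
    proof (intro allI impI)
      fix e :: real assume "e > 0"
      then have "e / (K + 1) > 0" using K0 by simp
      then have ev: "\<forall>\<^sub>F N in sequentially. \<bar>SUP x. tail_int p f x 1 N\<bar> < e / (K + 1)"
        using T unfolding tendsto_iff by (simp add: dist_real_def)
      show "\<forall>\<^sub>F N in sequentially. \<forall>r\<in>{0<..R0}. dist (SUP x. tail_int p f x r N) 0 < e"
        using ev
      proof eventually_elim
        case (elim N)
        let ?S = "SUP x. tail_int p f x 1 N"
        have S0: "0 \<le> ?S"
          using cSUP_upper[OF UNIV_I bdd1[of N], of 0] tail_nonneg[of p f 0 1 N] by linarith
        have KS: "K * ?S < e"
        proof -
          have "K * ?S \<le> K * (e / (K+1))" using elim S0 K0 by (intro mult_left_mono) auto
          also have "\<dots> < e" using K0 \<open>e > 0\<close> by (simp add: field_simps)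
          finally show ?thesis .
        qed
        show ?case
        proof
          fix r assume r: "r \<in> {0<..R0}"
          have bdd: "bdd_above (range (\<lambda>x. tail_int p f x r N))"
            by (rule bdd_aboveI2[where M="K * ?S"]) (use key[of r] r in auto)
          have up: "(SUP x. tail_int p f x r N) \<le> K * ?S"
            using key[of r] r by (intro cSUP_least) auto
          have lo: "0 \<le> (SUP x. tail_int p f x r N)"
            using cSUP_upper[OF UNIV_I bdd, of 0] tail_nonneg[of p f 0 r N] by linarith
          show "dist (SUP x. tail_int p f x r N) 0 < e"
            using up lo KS by (simp add: dist_real_def)
        qed
      qed
    qed
  qed
qed

end
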